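(* Let $n\ge0$, let $P_k=s_k\vec e_k\in\mathbb{R}^{n+1}$ for $0\le k\le n$, and let $Q=(i_0,\dots,i_n)\in\mathbb{Z}^{n+1}$ with $0\le i_k\le s_k-1$ for all $k$ and $\sum_{k=0}^nd_{n,k}i_k<d_n$. Let $0\le j\le n$ be an index with $i_j\ne0$, and let $w(x_0,\dots,x_n)=\sum_{k=0}^nw_kx_k$ be a linear function with $w(Q)=d_n$ and $w(P_k)=d_n$ for all $k\ne j$. Then (1) $\sum_{k=0}^nw_k\ge d_n$; and (2) if $\sum_{k=0}^nw_k=d_n$, then $\sum_{k=0}^{n-1}d_{n-1,k}i_k+i_n=d_{n-1}$.
   Context: Sylvester numbers: $s_0=2$, $s_{k+1}=1+\prod_{i=0}^ks_i$. For $m\ge0$, $d_m=\prod_{k=0}^ms_k$ and $d_{m,k}=d_m/s_k$. $\vec e_0,\dots,\vec e_n$ is the standard basis of $\mathbb{R}^{n+1}$. *)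

theory Defs
  imports Complex_Main
begin

fun sylv :: "nat \<Rightarrow> nat" where
  "sylv 0 = 2"
| "sylv (Suc k) = 1 + (\<Prod>i\<in>{..k}. sylv i)"

definition sylv_d :: "nat \<Rightarrow> nat" where
  "sylv_d m = (\<Prod>k\<in>{..m}. sylv k)"

text \<open>d_{m,k} = d_m / s_k (exact division, as s_k divides d_m for k \<le> m).\<close>
definition sylv_dk :: "nat \<Rightarrow> nat \<Rightarrow> nat" where
  "sylv_dk m k = sylv_d m div sylv k"

text \<open>Prefix product prod_{k<m} s k, i.e. d_{m-1}, with the empty-product
  convention d_{-1} = 1 when m = 0.\<close>
definition sylv_dpre :: "nat \<Rightarrow> nat" where
  "sylv_dpre m = (\<Prod>k\<in>{..<m}. sylv k)"

text \<open>Points of R^{n+1} are represented as functions nat \<Rightarrow> real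
  (only coordinates 0..n matter). The point P_k = s_k e_k.\<close>
definition sylvP :: "nat \<Rightarrow> (nat \<Rightarrow> real)" where
  "sylvP k = (\<lambda>m. if m = k then real (sylv k) else 0)"

definition linfun :: "nat \<Rightarrow> (nat \<Rightarrow> real) \<Rightarrow> (nat \<Rightarrow> real) \<Rightarrow> real" where
  "linfun n w x = (\<Sum>k\<in>{..n}. w k * x k)"

end

theory Submission
  imports Defs
begin

lemma sylv_pos: "sylv m \<ge> 1"
  by (cases m) auto

lemma sylv_eq: "sylv m = 1 + sylv_dpre m"
  by (cases m) (auto simp: sylv_dpre_def lessThan_Suc_atMost)

lemma dpre_pos: "sylv_dpre m \<ge> 1"
  unfolding sylv_dpre_def using sylv_pos by (simp add: Suc_le_eq prod_pos)

lemma sylv_mono_step: "sylv m \<le> sylv (Suc m)"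
proof -
  have "sylv_dpre (Suc m) = sylv_dpre m * sylv m" unfolding sylv_dpre_def by simp
  then have "sylv_dpre (Suc m) \<ge> sylv m" using dpre_pos[of m] by simp
  then show ?thesis using sylv_eq[of "Suc m"] by simp
qed

lemma sylv_mono: "j \<le> n \<Longrightarrow> sylv j \<le> sylv n"
  by (induction n rule: dec_induct) (use sylv_mono_step le_trans in blast)+

lemma d_eq: "sylv_d n = sylv_dpre n * sylv n"
  unfolding sylv_d_def sylv_dpre_def
  by (simp add: lessThan_Suc_atMost[symmetric] mult.commute)

lemma dk_prod: assumes "k \<le> n" shows "sylv_dk n k = (\<Prod>m\<in>{..n}-{k}. sylv m)"
proof -
  have "sylv_d n = sylv k * (\<Prod>m\<in>{..n}-{k}. sylv m)"
    unfolding sylv_d_def using assms by (simp add: prod.remove)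
  then show ?thesis unfolding sylv_dk_def using sylv_pos[of k] by simp
qed

lemma dk_mult: assumes "k \<le> n" shows "sylv_dk n k * sylv k = sylv_d n"
proof -
  have "sylv_d n = sylv k * (\<Prod>m\<in>{..n}-{k}. sylv m)"
    unfolding sylv_d_def using assms by (simp add: prod.remove)
  then show ?thesis using dk_prod[OF assms] by simp
qed

lemma dpre_prod: assumes "k < n" shows "sylv_dpre n div sylv k = (\<Prod>m\<in>{..<n}-{k}. sylv m)"
proof -
  have "sylv_dpre n = sylv k * (\<Prod>m\<in>{..<n}-{k}. sylv m)"
    unfolding sylv_dpre_def using assms by (simp add: prod.remove)
  then show ?thesis using sylv_pos[of k] by simp
qed

lemma dk_lt: assumes "k < n" shows "sylv_dk n k = sylv n * (sylv_dpre n div sylv k)"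
proof -
  have "{..n}-{k} = insert n ({..<n}-{k})" using assms by auto
  then show ?thesis using dk_prod[of k n] dpre_prod[OF assms] assms by simp
qed

lemma dk_n: "sylv_dk n n = sylv_dpre n"
  unfolding sylv_dk_def d_eq using sylv_pos[of n] by simp

lemma dk_Suc: assumes "k \<le> n" shows "sylv_dk (Suc n) k = sylv_dk n k * sylv (Suc n)"
proof -
  have "{..Suc n}-{k} = insert (Suc n) ({..n}-{k})" using assms by auto
  then show ?thesis using dk_prod[of k n] dk_prod[of k "Suc n"] assms by simp
qed

lemma dk_sum: "(\<Sum>k\<in>{..n}. sylv_dk n k) + 1 = sylv_d n"
proof (induction n)
  case 0
  then show ?case by (simp add: dk_n sylv_dpre_def sylv_d_def)
next
  case (Suc n)
  define X where "X = (\<Sum>k\<in>{..n}. sylv_dk n k)"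
  have "(\<Sum>k\<in>{..Suc n}. sylv_dk (Suc n) k) = (\<Sum>k\<in>{..n}. sylv_dk (Suc n) k) + sylv_dk (Suc n) (Suc n)"
    by simp
  also have "(\<Sum>k\<in>{..n}. sylv_dk (Suc n) k) = (\<Sum>k\<in>{..n}. sylv_dk n k * sylv (Suc n))"
    by (rule sum.cong) (simp_all add: dk_Suc del: sylv.simps)
  also have "\<dots> = X * sylv (Suc n)" unfolding X_def by (simp add: sum_distrib_right del: sylv.simps)
  also have "sylv_dk (Suc n) (Suc n) = sylv_d n"
    by (simp only: dk_n) (simp add: sylv_dpre_def sylv_d_def lessThan_Suc_atMost)
  also have sd: "sylv_d n = X + 1" using Suc.IH X_def by simp
  also have "sylv (Suc n) = X + 2" using sd by (simp add: sylv_d_def)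
  finally have "(\<Sum>k\<in>{..Suc n}. sylv_dk (Suc n) k) + 1 = (X + 1) * (X + 2)"
    by (simp add: algebra_simps)
  also have "\<dots> = sylv_d n * sylv (Suc n)" using sd \<open>sylv (Suc n) = X + 2\<close> by simp
  also have "\<dots> = sylv_d (Suc n)" by (simp add: sylv_d_def del: sylv.simps)
  finally show ?case .
qed

lemma dk_dvd: assumes "k \<le> n" "j \<le> n" "k \<noteq> j" shows "sylv j dvd sylv_dk n k"
  using assms by (simp add: dk_prod) (auto intro: dvd_prodI)

lemma dj_dvd: assumes "j \<le> n" shows "int (sylv j) dvd int (sylv_dk n j) + 1"
  using assms
proof (induction n)
  case 0
  then show ?case by (simp add: dk_n sylv_dpre_def)
next
  case (Suc n)
  show ?case
  proof (cases "j = Suc n")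
    case True
    then show ?thesis using sylv_eq[of "Suc n"] by (simp add: dk_n add.commute)
  next
    case False
    then have jn: "j \<le> n" using Suc.prems by simp
    have e: "int (sylv_dk (Suc n) j) + 1 = (int (sylv_dk n j) + 1) + int (sylv_dk n j) * int (sylv_d n)"
      using jn by (simp add: dk_Suc sylv_d_def algebra_simps)
    have "sylv j dvd sylv_d n" using jn unfolding sylv_d_def by (auto intro: dvd_prodI)
    then have "int (sylv j) dvd int (sylv_dk n j) * int (sylv_d n)" by simp
    then have "int (sylv j) dvd (int (sylv_dk n j) + 1) + int (sylv_dk n j) * int (sylv_d n)"
      by (rule dvd_add[OF Suc.IH[OF jn]])
    then show ?thesis by (simp only: e)
  qed
qed

lemma dvd_small: fixes x y m :: int
  assumes "m dvd x - y" "0 \<le> y" "y < m" "0 < x" shows "y \<le> x"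
proof (rule ccontr)
  assume "\<not> y \<le> x"
  obtain q where q: "x - y = m * q" using assms(1) by blast
  have "q < 0"
  proof (rule ccontr)
    assume "\<not> q < 0"
    then have "m * q \<ge> 0" using assms(2,3) by simp
    then show False using q \<open>\<not> y \<le> x\<close> by linarith
  qed
  then have "q \<le> -1" by simp
  then have "m * q \<le> m * (-1)" using assms(2,3) by (intro mult_left_mono) auto
  then show False using q assms by linarith
qed

lemma dvd_eq: fixes x y m :: int
  assumes "m dvd x - y" "0 \<le> y" "y < m" "0 \<le> x" "x < m" shows "x = y"
proof -
  obtain q where q: "x - y = m * q" using assms(1) by blast
  have "q = 0"
  proof (rule ccontr)
    assume "q \<noteq> 0"
    then have "\<bar>m * q\<bar> \<ge> m" using assms by (simp add: abs_mult)
    then show False using q assms by linarith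
  qed
  then show ?thesis using q by simp
qed

theorem lemma5p1:
  fixes n j :: nat and i :: "nat \<Rightarrow> int" and w :: "nat \<Rightarrow> real"
  assumes irange: "\<And>k. k \<le> n \<Longrightarrow> 0 \<le> i k \<and> i k \<le> int (sylv k) - 1"
    and isum: "(\<Sum>k\<in>{..n}. int (sylv_dk n k) * i k) < int (sylv_d n)"
    and j: "j \<le> n" and ij: "i j \<noteq> 0"
    and wQ: "linfun n w (\<lambda>k. real_of_int (i k)) = real (sylv_d n)"
    and wP: "\<And>k. k \<le> n \<Longrightarrow> k \<noteq> j \<Longrightarrow> linfun n w (sylvP k) = real (sylv_d n)"
  shows "(\<Sum>k\<in>{..n}. w k) \<ge> real (sylv_d n)
    \<and> ((\<Sum>k\<in>{..n}. w k) = real (sylv_d n) \<longrightarrow>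
         (\<Sum>k\<in>{..<n}. int (sylv_dpre n div sylv k) * i k) + i n = int (sylv_dpre n))"
proof -
  define a where "a k = int (sylv_dk n k)" for k
  define D where "D = int (sylv_d n)"
  define S where "S = (\<Sum>k\<in>{..n}. a k * i k)"
  define T where "T = D - S"
  define c where "c = w j - a j"
  have Tpos: "T > 0" using isum unfolding T_def S_def D_def a_def by simp
  have wk: "w k = a k" if "k \<le> n" "k \<noteq> j" for k
  proof -
    have "linfun n w (sylvP k) = w k * sylv k"
      unfolding linfun_def sylvP_def using that
      by (simp add: if_distrib sum.delta cong: if_cong)
    then have "w k * sylv k = real (sylv_dk n k * sylv k)" using wP[OF that] dk_mult[OF that(1)] by simp
    then show ?thesis unfolding a_def using sylv_pos[of k] by simp
  qed
  have wform: "w k = a k + (if k = j then c else 0)" if "k \<le> n" for k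
    using wk[OF that] c_def by auto
  have "real_of_int D = (\<Sum>k\<in>{..n}. w k * i k)" using wQ unfolding linfun_def D_def by simp
  also have "\<dots> = (\<Sum>k\<in>{..n}. a k * i k + (if k = j then c * i k else 0))"
    by (rule sum.cong) (auto simp: wform algebra_simps)
  also have "\<dots> = S + c * i j" unfolding S_def using j by (simp add: sum.distrib)
  finally have cT: "c * i j = T" unfolding T_def by simp
  have sw: "(\<Sum>k\<in>{..n}. w k) = D - 1 + c"
  proof -
    have "(\<Sum>k\<in>{..n}. w k) = (\<Sum>k\<in>{..n}. a k + (if k = j then c else 0))"
      by (rule sum.cong) (auto simp: wform)
    also have "\<dots> = (\<Sum>k\<in>{..n}. a k) + c" using j by (simp add: sum.distrib)
    also have "(\<Sum>k\<in>{..n}. a k) = D - 1"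
      using dk_sum[of n] unfolding a_def D_def by (simp flip: of_nat_sum add: algebra_simps)
    finally show ?thesis by simp
  qed
  have cong: "int (sylv m) dvd T - i m" if "m \<le> n" for m
  proof -
    have "T - i m = D - (\<Sum>k\<in>{..n}-{m}. a k * i k) - (a m + 1) * i m"
      unfolding T_def S_def using that by (simp add: sum.remove algebra_simps)
    moreover have "sylv m dvd sylv_d n" unfolding sylv_d_def using that
      by (auto intro: dvd_prodI)
    then have "int (sylv m) dvd D" unfolding D_def by (simp only: int_dvd_int_iff)
    moreover have "int (sylv m) dvd (\<Sum>k\<in>{..n}-{m}. a k * i k)"
      by (rule dvd_sum) (use that dk_dvd in \<open>auto simp: a_def\<close>)
    moreover have "int (sylv m) dvd (a m + 1) * i m" using dj_dvd[OF that] unfolding a_def by simp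
    ultimately show ?thesis by (metis dvd_diff)
  qed
  have ijpos: "i j > 0" using irange[OF j] ij by simp
  have "i j \<le> T" using dvd_small[OF cong[OF j]] irange[OF j] Tpos by simp
  then have c1: "c \<ge> 1"
  proof -
    assume le: "i j \<le> T"
    show "c \<ge> 1"
    proof (rule ccontr)
      assume "\<not> c \<ge> 1"
      then have "c * real_of_int (i j) < 1 * real_of_int (i j)" using ijpos by (intro mult_strict_right_mono) auto
      then show False using cT le by simp
    qed
  qed
  have part1: "(\<Sum>k\<in>{..n}. w k) \<ge> real (sylv_d n)" using sw c1 D_def by simp
  have part2: "(\<Sum>k\<in>{..<n}. int (sylv_dpre n div sylv k) * i k) + i n = int (sylv_dpre n)"
    if eq: "(\<Sum>k\<in>{..n}. w k) = real (sylv_d n)"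
  proof -
    have "c = 1" using eq sw D_def by simp
    then have Tij: "T = i j" using cT by simp
    have n: "n \<le> n" by simp
    have "i j = i n"
    proof (rule dvd_eq)
      show "int (sylv n) dvd i j - i n" using cong[OF n] Tij by simp
      show "0 \<le> i n" "i n < int (sylv n)" "0 \<le> i j" using irange[OF j] irange[OF n] by auto
      show "i j < int (sylv n)" using irange[OF j] sylv_mono[OF j] by linarith
    qed
    then have TI: "T = i n" using Tij by simp
    define B where "B = (\<Sum>k\<in>{..<n}. int (sylv_dpre n div sylv k) * i k)"
    define s where "s = int (sylv n)"
    define p where "p = int (sylv_dpre n)"
    have sp: "s = p + 1" unfolding s_def p_def using sylv_eq[of n] by simp
    have "S = (\<Sum>k\<in>{..<n}. a k * i k) + a n * i n"
      unfolding S_def by (simp add: lessThan_Suc_atMost[symmetric])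
    also have "(\<Sum>k\<in>{..<n}. a k * i k) = s * B"
      unfolding B_def s_def a_def by (simp add: sum_distrib_left dk_lt algebra_simps)
    also have "a n = p" unfolding a_def p_def by (simp add: dk_n)
    finally have "S = s * B + p * i n" .
    moreover have "D = s * p" unfolding D_def s_def p_def by (simp add: d_eq)
    ultimately have "s * B + p * i n = s * p - i n" using TI T_def by simp
    then have "s * (B + i n) = s * p" using sp by (simp add: algebra_simps)
    then have "B + i n = p" using sylv_pos[of n] s_def by simp
    then show ?thesis unfolding B_def p_def .
  qed
  show ?thesis using part1 part2 by blast
qed

end
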